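(* Let $X$ be a fake weighted projective space with weights $(\lambda_0,\lambda_1,\ldots,\lambda_n)$ and associated $n$-simplex $P$, and suppose $X$ has at worst canonical singularities. Then $$\mathrm{mult}\,P\leq\frac{h^{n-1}}{\lambda_1\lambda_2\cdots\lambda_n},\qquad\text{where }h:=\sum_{i=0}^n\lambda_i.$$
   Context: Let $N\cong\mathbb{Z}^n$ be a lattice and $N_\mathbb{R}:=N\otimes_\mathbb{Z}\mathbb{R}$. Let $\rho_0,\ldots,\rho_n\in N$ be primitive lattice points with $N_\mathbb{R}=\sum_{i=0}^n\mathbb{R}_{\geq0}\rho_i$. There are positive integers $\lambda_0,\ldots,\lambda_n$ with $\gcd\{\lambda_0,\ldots,\lambda_n\}=1$ such that $\sum_{i=0}^n\lambda_i\rho_i=0$. The cones $\sigma_i$ generated by $\{\rho_j: j\neq i\}$ generate a complete simplicial fan; the associated projective toric variety $X$ is called a fake weighted projective space with weights $(\lambda_0,\ldots,\lambda_n)$ (indexed consistently with the $\rho_i$), and $P:=\mathrm{conv}\{\rho_0,\ldots,\rho_n\}$ is its associated simplex. The multiplicity is $\mathrm{mult}\,P:=[N:\mathbb{Z}\rho_0+\cdots+\mathbb{Z}\rho_n]$. *)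

theory Defs
  imports "HOL-Analysis.Analysis"
begin

text \<open>The lattice N is modelled as int^'n (so n = CARD('n)), and N_R as real^'n.\<close>

definition to_real_vec :: "int ^ 'n \<Rightarrow> real ^ 'n" where
  "to_real_vec v = (\<chi> j. real_of_int (v $ j))"

definition primitive_lattice_point :: "int ^ 'n \<Rightarrow> bool" where
  "primitive_lattice_point v \<longleftrightarrow>
     (\<forall>(k::int) w. v = k *s w \<longrightarrow> k = 1 \<or> k = -1)"

definition gen_sublattice :: "(nat \<Rightarrow> int ^ 'n) \<Rightarrow> nat \<Rightarrow> (int ^ 'n) set" where
  "gen_sublattice \<rho> m = {\<Sum>i\<in>{0..m}. c i *s \<rho> i | c. True}"

definition lattice_index :: "(int ^ 'n) set \<Rightarrow> nat" where
  "lattice_index L = card ((\<lambda>v. (\<lambda>l. v + l) ` L) ` (UNIV :: (int ^ 'n) set))"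

definition mult_simplex :: "(nat \<Rightarrow> int ^ 'n) \<Rightarrow> nat" where
  "mult_simplex \<rho> = lattice_index (gen_sublattice \<rho> CARD('n))"

definition assoc_simplex :: "(nat \<Rightarrow> int ^ 'n) \<Rightarrow> (real ^ 'n) set" where
  "assoc_simplex \<rho> = convex hull ((\<lambda>i. to_real_vec (\<rho> i)) ` {0..CARD('n)})"

definition fake_wps_data :: "(nat \<Rightarrow> int ^ 'n) \<Rightarrow> (nat \<Rightarrow> nat) \<Rightarrow> bool" where
  "fake_wps_data \<rho> wt \<longleftrightarrow>
     (\<forall>i\<in>{0..CARD('n)}. primitive_lattice_point (\<rho> i)) \<and>
     (\<forall>x::real ^ 'n. \<exists>c. (\<forall>i. c i \<ge> 0) \<and>
         x = (\<Sum>i\<in>{0..CARD('n)}. c i *\<^sub>R to_real_vec (\<rho> i))) \<and>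
     (\<forall>i\<in>{0..CARD('n)}. wt i > 0) \<and>
     Gcd (wt ` {0..CARD('n)}) = 1 \<and>
     (\<Sum>i\<in>{0..CARD('n)}. int (wt i) *s \<rho> i) = 0"

text \<open>X has at worst canonical singularities iff the origin is the only lattice point
  in the interior of P.\<close>
definition canonical_simplex :: "(nat \<Rightarrow> int ^ 'n) \<Rightarrow> bool" where
  "canonical_simplex \<rho> \<longleftrightarrow>
     (\<forall>v::int ^ 'n. to_real_vec v \<in> interior (assoc_simplex \<rho>) \<longrightarrow> v = 0)"

end

theory Submission
  imports Defs
begin


lemma trv_add: "to_real_vec (a + b) = to_real_vec a + to_real_vec b"
  by (simp add: to_real_vec_def vec_eq_iff)
lemma trv_diff: "to_real_vec (a - b) = to_real_vec a - to_real_vec b"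
  by (simp add: to_real_vec_def vec_eq_iff)
lemma trv_smult: "to_real_vec (c *s a) = real_of_int c *\<^sub>R to_real_vec a"
  by (simp add: to_real_vec_def vec_eq_iff)
lemma trv_zero[simp]: "to_real_vec 0 = 0"
  by (simp add: to_real_vec_def vec_eq_iff)
lemma trv_sum: "to_real_vec (\<Sum>i\<in>S. f i) = (\<Sum>i\<in>S. to_real_vec (f i))"
  by (induction S rule: infinite_finite_induct) (auto simp: trv_add)
lemma trv_eq0: "to_real_vec a = 0 \<longleftrightarrow> a = 0"
  by (simp add: to_real_vec_def vec_eq_iff)


lemma vsmult_sum_distrib: "(c::int) *s (\<Sum>i\<in>S. f i) = (\<Sum>i\<in>S. c *s f i)"
  by (induction S rule: infinite_finite_induct) (auto simp: vector_ssub_ldistrib vec_eq_iff algebra_simps)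

lemma gen_memI: "(\<Sum>i\<in>{0..m}. c i *s \<rho> i) \<in> gen_sublattice \<rho> m"
  unfolding gen_sublattice_def by blast

lemma gen_memE: "x \<in> gen_sublattice \<rho> m \<Longrightarrow> \<exists>c. x = (\<Sum>i\<in>{0..m}. c i *s \<rho> i)"
  unfolding gen_sublattice_def by blast

lemma gen_zero: "0 \<in> gen_sublattice \<rho> m"
  using gen_memI[of "\<lambda>_. 0" \<rho> m] by simp

lemma gen_diff: assumes "x \<in> gen_sublattice \<rho> m" "y \<in> gen_sublattice \<rho> m"
  shows "x - y \<in> gen_sublattice \<rho> m"
proof -
  obtain c d where "x = (\<Sum>i\<in>{0..m}. c i *s \<rho> i)" "y = (\<Sum>i\<in>{0..m}. d i *s \<rho> i)"
    using assms gen_memE by metis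
  then have "x - y = (\<Sum>i\<in>{0..m}. (c i - d i) *s \<rho> i)"
    by (simp add: sum_subtractf[symmetric] vec_eq_iff algebra_simps)
  then show ?thesis using gen_memI by metis
qed

lemma gen_add: assumes "x \<in> gen_sublattice \<rho> m" "y \<in> gen_sublattice \<rho> m"
  shows "x + y \<in> gen_sublattice \<rho> m"
  using gen_diff[OF assms(1) gen_diff[OF gen_zero assms(2)]] by simp

lemma gen_smult: assumes "x \<in> gen_sublattice \<rho> m"
  shows "k *s x \<in> gen_sublattice \<rho> m"
proof -
  obtain c where "x = (\<Sum>i\<in>{0..m}. c i *s \<rho> i)"
    using assms gen_memE by metis
  then have "k *s x = (\<Sum>i\<in>{0..m}. (k * c i) *s \<rho> i)"
    by (simp add: vsmult_sum_distrib vec_eq_iff algebra_simps sum_distrib_left)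
  then show ?thesis using gen_memI by metis
qed

definition cosetL :: "(int^'n) set \<Rightarrow> int^'n \<Rightarrow> (int^'n) set" where
  "cosetL L v = (\<lambda>l. v + l) ` L"

lemma cosetL_eq:
  assumes "0 \<in> L" "\<And>a b. a \<in> L \<Longrightarrow> b \<in> L \<Longrightarrow> a - b \<in> L"
  shows "cosetL L x = cosetL L y \<longleftrightarrow> x - y \<in> L"
proof
  assume "cosetL L x = cosetL L y"
  then have "x \<in> cosetL L y" using assms(1) unfolding cosetL_def by (metis add.right_neutral image_eqI)
  then obtain l where "l \<in> L" "x = y + l" unfolding cosetL_def by auto
  then show "x - y \<in> L" by simp
next
  assume h: "x - y \<in> L"
  have neg: "- a \<in> L" if "a \<in> L" for a using assms(2)[OF assms(1) that] by simp
  have add: "a + b \<in> L" if "a \<in> L" "b \<in> L" for a b using assms(2)[OF that(1) neg[OF that(2)]] by simp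
  show "cosetL L x = cosetL L y"
    unfolding cosetL_def
  proof (intro set_eqI iffI)
    fix z assume "z \<in> (+) x ` L"
    then obtain l where "l \<in> L" "z = x + l" by auto
    then have "z = y + ((x - y) + l)" "(x - y) + l \<in> L" using add h by auto
    then show "z \<in> (+) y ` L" by blast
  next
    fix z assume "z \<in> (+) y ` L"
    then obtain l where "l \<in> L" "z = y + l" by auto
    then have "z = x + (l - (x - y))" "l - (x - y) \<in> L" using assms(2) h by auto
    then show "z \<in> (+) x ` L" by blast
  qed
qed

lemma lattice_index_cosetL: "lattice_index L = card (range (cosetL L))"
  unfolding lattice_index_def cosetL_def by simp


lemma gen_cosetL_eq: "cosetL (gen_sublattice \<rho> m) x = cosetL (gen_sublattice \<rho> m) y \<longleftrightarrow> x - y \<in> gen_sublattice \<rho> m"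
  by (rule cosetL_eq) (auto intro: gen_zero gen_diff)

lemma smult_smult_int: "(a::int) *s (b *s x) = (a * b) *s x"
  by (simp add: vec_eq_iff)

lemma exponent_lemma:
  fixes \<rho> :: "nat \<Rightarrow> int^'n"
  assumes fin: "finite (range (cosetL (gen_sublattice \<rho> m)))"
    and mpos: "card (range (cosetL (gen_sublattice \<rho> m))) = M"
  shows "int (fact M) *s x \<in> gen_sublattice \<rho> m"
proof -
  let ?L = "gen_sublattice \<rho> m"
  let ?f = "\<lambda>k::nat. cosetL ?L (int k *s x)"
  have "?f ` {0..M} \<subseteq> range (cosetL ?L)" by auto
  moreover have "card {0..M} > M" by simp
  ultimately have "\<not> inj_on ?f {0..M}"
    using card_inj_on_le[of ?f "{0..M}" "range (cosetL ?L)"] fin mpos by force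
  then obtain i j where ij: "i \<in> {0..M}" "j \<in> {0..M}" "i \<noteq> j" "?f i = ?f j"
    unfolding inj_on_def by blast
  then have "int i *s x - int j *s x \<in> ?L" using gen_cosetL_eq by blast
  then have d: "(int i - int j) *s x \<in> ?L" by (simp add: vec_eq_iff algebra_simps)
  have d2: "(int j - int i) *s x \<in> ?L" using gen_diff[OF gen_zero d] by (simp add: vec_eq_iff algebra_simps)
  show ?thesis
  proof (cases "i < j")
    case True
    then have "(j - i) dvd fact M" using ij by (intro dvd_fact) auto
    then obtain q where q: "fact M = (j - i) * q" by blast
    have "int (fact M) = int q * (int j - int i)" using q True by (simp add: of_nat_diff)
    then show ?thesis using gen_smult[OF d2, of "int q"] by (metis smult_smult_int)
  next
    case False
    then have lt: "j < i" using ij by simp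
    then have "(i - j) dvd fact M" using ij by (intro dvd_fact) auto
    then obtain q where q: "fact M = (i - j) * q" by blast
    have "int (fact M) = int q * (int i - int j)" using q lt by (simp add: of_nat_diff)
    then show ?thesis using gen_smult[OF d, of "int q"] by (metis smult_smult_int)
  qed
qed


context
  fixes \<rho> :: "nat \<Rightarrow> int ^ 'n" and wt :: "nat \<Rightarrow> nat"
  assumes fw: "fake_wps_data \<rho> wt"
begin

abbreviation "rr i \<equiv> to_real_vec (\<rho> i)"

lemma rel_real: "(\<Sum>i\<in>{0..CARD('n)}. real (wt i) *\<^sub>R rr i) = 0"
proof -
  have "to_real_vec (\<Sum>i\<in>{0..CARD('n)}. int (wt i) *s \<rho> i) = 0" using fw unfolding fake_wps_data_def by simp
  then show ?thesis by (simp add: trv_sum trv_smult)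
qed

lemma wt_pos: "i \<in> {0..CARD('n)} \<Longrightarrow> wt i > 0" using fw unfolding fake_wps_data_def by auto

lemma h_pos: "(\<Sum>i\<in>{0..CARD('n)}. wt i) > 0"
proof -
  have "wt 0 > 0" using wt_pos by simp
  moreover have "wt 0 \<le> (\<Sum>i\<in>{0..CARD('n)}. wt i)" by (rule member_le_sum) auto
  ultimately show ?thesis by linarith
qed

lemma span_all: "span (rr ` {0..CARD('n)}) = UNIV"
proof -
  have "x \<in> span (rr ` {0..CARD('n)})" for x
  proof -
    obtain c where "x = (\<Sum>i\<in>{0..CARD('n)}. c i *\<^sub>R rr i)" using fw unfolding fake_wps_data_def by blast
    then show ?thesis
      apply simp apply (rule span_sum) apply (rule span_scale) apply (rule span_base) by auto
  qed
  then show ?thesis by auto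
qed

lemma zero_in_hull: "0 \<in> convex hull (rr ` {0..CARD('n)})"
proof -
  define h where "h = real (\<Sum>i\<in>{0..CARD('n)}. wt i)"
  have hp: "h > 0" using h_pos unfolding h_def by (simp only: of_nat_0_less_iff)
  have "(\<Sum>i\<in>{0..CARD('n)}. (real (wt i) / h) *\<^sub>R rr i) \<in> convex hull (rr ` {0..CARD('n)})"
  proof (rule convex_sum)
    show "(\<Sum>i\<in>{0..CARD('n)}. real (wt i) / h) = 1" using hp unfolding h_def by (simp add: sum_divide_distrib[symmetric])
  qed (use hp in \<open>auto intro: hull_inc\<close>)
  moreover have "(\<Sum>i\<in>{0..CARD('n)}. (real (wt i) / h) *\<^sub>R rr i) = (1/h) *\<^sub>R (\<Sum>i\<in>{0..CARD('n)}. real (wt i) *\<^sub>R rr i)"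
    by (simp add: scaleR_sum_right)
  ultimately show ?thesis using rel_real by simp
qed

lemma aff_all: "affine hull (rr ` {0..CARD('n)}) = UNIV"
  using affine_hull_span_0[of "rr ` {0..CARD('n)}"] zero_in_hull convex_hull_subset_affine_hull span_all by blast

lemma card_S: "card (rr ` {0..CARD('n)}) = card {0..CARD('n)}"
proof -
  have "aff_dim (rr ` {0..CARD('n)}) = int CARD('n)"
    by (metis aff_all aff_dim_affine_hull aff_dim_UNIV DIM_cart DIM_real mult.right_neutral)
  moreover have "aff_dim (rr ` {0..CARD('n)}) \<le> int (card (rr ` {0..CARD('n)})) - 1" by (rule aff_dim_le_card) simp
  moreover have "card (rr ` {0..CARD('n)}) \<le> card {0..CARD('n)}" by (rule card_image_le) simp
  ultimately show ?thesis by simp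
qed

lemma inj_r: "inj_on rr {0..CARD('n)}"
  using card_S by (simp add: eq_card_imp_inj_on)

lemma aff_indep: "\<not> affine_dependent (rr ` {0..CARD('n)})"
proof -
  have "aff_dim (rr ` {0..CARD('n)}) = int CARD('n)"
    by (metis aff_all aff_dim_affine_hull aff_dim_UNIV DIM_cart DIM_real mult.right_neutral)
  then show ?thesis using card_S by (simp add: affine_independent_iff_card)
qed

lemma affine_rel_zero:
  assumes "(\<Sum>i\<in>{0..CARD('n)}. \<mu> i) = (0::real)" "(\<Sum>i\<in>{0..CARD('n)}. \<mu> i *\<^sub>R rr i) = 0" "j \<in> {0..CARD('n)}"
  shows "\<mu> j = 0"
proof -
  define U where "U v = \<mu> (the_inv_into {0..CARD('n)} rr v)" for v
  have Ur: "U (rr i) = \<mu> i" if "i \<in> {0..CARD('n)}" for i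
    unfolding U_def using the_inv_into_f_f[OF inj_r that] by simp
  have "sum U (rr ` {0..CARD('n)}) = (\<Sum>i\<in>{0..CARD('n)}. U (rr i))" by (rule sum.reindex_cong[OF inj_r]) auto
  also have "\<dots> = 0" using assms(1) Ur by simp
  finally have s1: "sum U (rr ` {0..CARD('n)}) = 0" .
  have "(\<Sum>v\<in>rr ` {0..CARD('n)}. U v *\<^sub>R v) = (\<Sum>i\<in>{0..CARD('n)}. U (rr i) *\<^sub>R rr i)" by (rule sum.reindex_cong[OF inj_r]) auto
  also have "\<dots> = 0" using assms(2) Ur by simp
  finally have s2: "(\<Sum>v\<in>rr ` {0..CARD('n)}. U v *\<^sub>R v) = 0" .
  have "\<forall>v\<in>rr ` {0..CARD('n)}. U v = 0"
    using aff_indep s1 s2 affine_dependent_explicit_finite[of "rr ` {0..CARD('n)}"] by auto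
  then show ?thesis using Ur assms(3) by force
qed

lemma interior_pt:
  assumes "\<And>i. i \<in> {0..CARD('n)} \<Longrightarrow> \<alpha> i > (0::real)" "(\<Sum>i\<in>{0..CARD('n)}. \<alpha> i) = 1"
  shows "(\<Sum>i\<in>{0..CARD('n)}. \<alpha> i *\<^sub>R rr i) \<in> interior (assoc_simplex \<rho>)"
proof -
  define U where "U v = \<alpha> (the_inv_into {0..CARD('n)} rr v)" for v
  have Ur: "U (rr i) = \<alpha> i" if "i \<in> {0..CARD('n)}" for i
    unfolding U_def using the_inv_into_f_f[OF inj_r that] by simp
  have "sum U (rr ` {0..CARD('n)}) = (\<Sum>i\<in>{0..CARD('n)}. U (rr i))" by (rule sum.reindex_cong[OF inj_r]) auto
  also have "\<dots> = 1" using assms(2) Ur by simp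
  finally have s1: "sum U (rr ` {0..CARD('n)}) = 1" .
  have "(\<Sum>v\<in>rr ` {0..CARD('n)}. U v *\<^sub>R v) = (\<Sum>i\<in>{0..CARD('n)}. U (rr i) *\<^sub>R rr i)" by (rule sum.reindex_cong[OF inj_r]) auto
  also have "\<dots> = (\<Sum>i\<in>{0..CARD('n)}. \<alpha> i *\<^sub>R rr i)" using Ur by simp
  finally have s2: "(\<Sum>v\<in>rr ` {0..CARD('n)}. U v *\<^sub>R v) = (\<Sum>i\<in>{0..CARD('n)}. \<alpha> i *\<^sub>R rr i)" .
  have pos: "\<forall>v\<in>rr ` {0..CARD('n)}. 0 < U v" using Ur assms(1) by auto
  have "\<not> card (rr ` {0..CARD('n)}) \<le> DIM(real^'n)" using card_S by simp
  then show ?thesis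
    unfolding assoc_simplex_def
    using interior_convex_hull_explicit_minimal[OF aff_indep] s1 s2 pos by auto
qed

end

lemma split0: "sum (f::nat \<Rightarrow> 'a::comm_monoid_add) {0..n} = f 0 + sum f {1..n}"
  by (simp add: sum.atLeast_Suc_atMost)

lemma vsum_add: "(\<Sum>i\<in>S. (a i + b i) *s v i) = (\<Sum>i\<in>S. a i *s v i) + (\<Sum>i\<in>S. (b i::int) *s v i)"
  by (simp add: vector_sadd_rdistrib sum.distrib)
lemma vsum_diff: "(\<Sum>i\<in>S. (a i - b i) *s v i) = (\<Sum>i\<in>S. a i *s v i) - (\<Sum>i\<in>S. (b i::int) *s v i)"
  by (simp add: vector_sub_rdistrib sum_subtractf)
lemma vsum_cmul: "(\<Sum>i\<in>S. (c * a i) *s v i) = (c::int) *s (\<Sum>i\<in>S. a i *s v i)"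
  by (simp add: vsmult_sum_distrib smult_smult_int)

lemma main_ineq:
  fixes \<rho> :: "nat \<Rightarrow> int ^ 'n" and wt :: "nat \<Rightarrow> nat"
  assumes fw: "fake_wps_data \<rho> wt"
    and can: "canonical_simplex \<rho>"
    and fin: "finite (range (cosetL (gen_sublattice \<rho> CARD('n))))"
  defines "m \<equiv> card (range (cosetL (gen_sublattice \<rho> CARD('n))))"
    and "h \<equiv> (\<Sum>i\<in>{0..CARD('n)}. wt i)"
  shows "m * (h * (\<Prod>i\<in>{1..CARD('n)}. wt i)) * (fact m)^CARD('n) \<le> (h * fact m) ^ CARD('n)"
proof -
  define n where "n = CARD('n)"
  define I where "I = {0..n}"
  define I1 where "I1 = {1..n}"
  define L where "L = gen_sublattice \<rho> n"
  define CC where "CC = range (cosetL L)"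
  define En :: nat where "En = fact m"
  define E :: int where "E = int En"
  define D :: int where "D = int (h * En)"
  have Epos: "E > 0" unfolding E_def En_def by simp
  have hpos: "h > 0" using h_pos[OF fw] unfolding h_def .
  have Dpos: "D > 0" unfolding D_def using hpos En_def by simp
  have DE: "D = int h * E" unfolding D_def E_def by simp
  have rel: "(\<Sum>i\<in>I. int (wt i) *s \<rho> i) = 0" using fw unfolding fake_wps_data_def I_def n_def by simp
  have Lsub: "L = gen_sublattice \<rho> n" by (rule L_def)
  have expo: "E *s x \<in> L" for x
    unfolding E_def En_def L_def n_def m_def using exponent_lemma[OF fin refl] .
  define kk where "kk x = (SOME k. E *s x = (\<Sum>i\<in>I. k i *s \<rho> i))" for x
  have kk: "E *s x = (\<Sum>i\<in>I. kk x i *s \<rho> i)" for x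
  proof -
    have "\<exists>k. E *s x = (\<Sum>i\<in>I. k i *s \<rho> i)" using gen_memE[of "E *s x" \<rho> n] expo[of x] unfolding L_def I_def by blast
    then show ?thesis unfolding kk_def by (rule someI_ex)
  qed
  define rep where "rep C = (SOME x. cosetL L x = C)" for C
  have rep: "C \<in> CC \<Longrightarrow> cosetL L (rep C) = C" for C
    unfolding rep_def CC_def by (rule someI_ex) auto
  define u where "u C j i = int h * kk (rep C) i + (int j * E - (\<Sum>l\<in>I. kk (rep C) l)) * int (wt i)" for C and j::nat and i
  have hI: "(\<Sum>i\<in>I. int (wt i)) = int h" unfolding h_def I_def n_def by simp
  have U1: "(\<Sum>i\<in>I. u C j i) = int j * D" for C j
  proof -
    have "(\<Sum>i\<in>I. u C j i) = int h * (\<Sum>i\<in>I. kk (rep C) i) + (int j * E - (\<Sum>l\<in>I. kk (rep C) l)) * (\<Sum>i\<in>I. int (wt i))"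
      by (simp add: u_def sum.distrib sum_distrib_left sum_distrib_right)
    then show ?thesis unfolding hI DE by (simp add: algebra_simps)
  qed
  have U2: "D *s rep C = (\<Sum>i\<in>I. u C j i *s \<rho> i)" for C j
  proof -
    have "(\<Sum>i\<in>I. u C j i *s \<rho> i) = int h *s (\<Sum>i\<in>I. kk (rep C) i *s \<rho> i) + (int j * E - (\<Sum>l\<in>I. kk (rep C) l)) *s (\<Sum>i\<in>I. int (wt i) *s \<rho> i)"
      unfolding u_def vsum_add vsum_cmul ..
    also have "\<dots> = int h *s (E *s rep C)" using kk[of "rep C"] rel by (simp add: vec_eq_iff)
    also have "\<dots> = D *s rep C" by (simp add: smult_smult_int DE)
    finally show ?thesis by simp
  qed
  define Box where "Box = PiE I1 (\<lambda>i. {0..<E * int (wt i)})"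
  define T where "T = PiE I1 (\<lambda>i::nat. {0..<D})"
  define Dom where "Dom = CC \<times> ({0..<h} \<times> Box)"
  define \<Phi> where "\<Phi> = (\<lambda>(C,j,b). restrict (\<lambda>i. (u C j i + b i) mod D) I1)"
  have maps: "\<Phi> ` Dom \<subseteq> T"
    unfolding \<Phi>_def T_def using Dpos by (auto simp: PiE_iff)
  have inj: "inj_on \<Phi> Dom"
  proof (rule inj_onI)
    fix p p' assume pD: "p \<in> Dom" "p' \<in> Dom" and eq: "\<Phi> p = \<Phi> p'"
    obtain C j b where p: "p = (C,j,b)" by (cases p) auto
    obtain C' j' b' where p': "p' = (C',j',b')" by (cases p') auto
    have mem: "C \<in> CC" "j < h" "b \<in> Box" "C' \<in> CC" "j' < h" "b' \<in> Box"
      using pD unfolding p p' Dom_def by auto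
    have I1I: "I = insert 0 I1" "0 \<notin> I1" "finite I1" unfolding I_def I1_def by auto
    have sI: "(\<Sum>i\<in>I. f i) = f 0 + (\<Sum>i\<in>I1. f i)" for f :: "nat \<Rightarrow> int"
      unfolding I_def I1_def by (rule split0)
    have modeq: "(u C j i + b i) mod D = (u C' j' i + b' i) mod D" if "i \<in> I1" for i
    proof -
      have "\<Phi> p i = \<Phi> p' i" using eq by simp
      then show ?thesis using that unfolding p p' \<Phi>_def by simp
    qed
    define w where "w i = (if i = 0 then - (\<Sum>l\<in>I1. b' l - b l) else b' i - b i)" for i
    define z1 where "z1 i = (u C j i - u C' j' i - w i) div D" for i
    define z where "z i = (if i = 0 then int j - int j' - (\<Sum>l\<in>I1. z1 l) else z1 i)" for i
    have Z1: "u C j i - u C' j' i = w i + D * z i" if "i \<in> I1" for i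
    proof -
      have i0: "i \<noteq> 0" using that I1I by metis
      have "D dvd (u C j i + b i) - (u C' j' i + b' i)" using modeq[OF that] by (simp add: mod_eq_dvd_iff)
      moreover have "(u C j i + b i) - (u C' j' i + b' i) = u C j i - u C' j' i - w i" using i0 unfolding w_def by simp
      ultimately have "D dvd u C j i - u C' j' i - w i" by simp
      then have "D * z1 i = u C j i - u C' j' i - w i" unfolding z1_def by simp
      then show ?thesis using i0 unfolding z_def by simp
    qed
    have sumdiff: "(\<Sum>i\<in>I. u C j i - u C' j' i) = (int j - int j') * D"
      using U1[of C j] U1[of C' j'] by (simp add: sum_subtractf algebra_simps)
    have "(\<Sum>i\<in>I1. u C j i - u C' j' i) = (\<Sum>i\<in>I1. w i + D * z1 i)"
      using Z1 I1I(2) by (intro sum.cong) (auto simp: z_def)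
    also have "\<dots> = (\<Sum>i\<in>I1. w i) + D * (\<Sum>i\<in>I1. z1 i)" by (simp add: sum.distrib sum_distrib_left)
    finally have s1: "(\<Sum>i\<in>I1. u C j i - u C' j' i) = (\<Sum>i\<in>I1. w i) + D * (\<Sum>i\<in>I1. z1 i)" .
    have w1: "(\<Sum>i\<in>I1. w i) = (\<Sum>l\<in>I1. b' l - b l)"
      using I1I(2) by (intro sum.cong) (auto simp: w_def)
    have Z0: "u C j 0 - u C' j' 0 = w 0 + D * z 0"
      using sumdiff s1 w1 unfolding sI[of "\<lambda>i. u C j i - u C' j' i"] by (simp add: w_def z_def algebra_simps)
    have Z: "u C j i - u C' j' i = w i + D * z i" if "i \<in> I" for i
      using that Z0 Z1 I1I by (cases "i = 0") auto
    have wsum: "(\<Sum>i\<in>I. w i) = 0" using w1 unfolding sI by (simp add: w_def)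
    define y where "y = rep C - rep C' - (\<Sum>i\<in>I. z i *s \<rho> i)"
    have Y: "D *s y = (\<Sum>i\<in>I. w i *s \<rho> i)"
    proof -
      have "D *s y = D *s rep C - D *s rep C' - D *s (\<Sum>i\<in>I. z i *s \<rho> i)"
        unfolding y_def by (simp add: vector_ssub_ldistrib)
      also have "\<dots> = (\<Sum>i\<in>I. (u C j i - u C' j' i - D * z i) *s \<rho> i)"
        unfolding U2[of C j] U2[of C' j'] vsum_diff vsum_cmul ..
      also have "\<dots> = (\<Sum>i\<in>I. w i *s \<rho> i)" using Z by (intro sum.cong) auto
      finally show ?thesis .
    qed
    have wb: "\<bar>w i\<bar> < E * int (wt i)" if "i \<in> I1" for i
    proof -
      have "b i \<in> {0..<E * int (wt i)}" "b' i \<in> {0..<E * int (wt i)}"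
        using mem that unfolding Box_def by (auto simp: PiE_iff)
      then show ?thesis using that I1I unfolding w_def by auto
    qed
    define s :: int where "s = (if w 0 \<ge> 0 then 1 else -1)"
    have s1: "s * s = 1" "s \<noteq> 0" unfolding s_def by auto
    define \<alpha> where "\<alpha> i = real_of_int (E * int (wt i) + s * w i) / real_of_int D" for i
    have apos: "\<alpha> i > 0" if "i \<in> I" for i
    proof -
      have "E * int (wt i) + s * w i > 0"
      proof (cases "i = 0")
        case True
        then have "s * w i \<ge> 0" unfolding s_def by auto
        moreover have "wt i > 0" using wt_pos[OF fw] that unfolding I_def n_def by auto
        ultimately show ?thesis using Epos by (simp add: add_pos_nonneg)
      next
        case False
        then have "i \<in> I1" using that unfolding I_def I1_def by auto
        from wb[OF this] have "\<bar>s * w i\<bar> < E * int (wt i)" unfolding s_def by auto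
        then show ?thesis by linarith
      qed
      then have "real_of_int (E * int (wt i) + s * w i) > 0" by (simp only: of_int_0_less_iff)
      moreover have "real_of_int D > 0" using Dpos by simp
      ultimately show ?thesis unfolding \<alpha>_def by (rule divide_pos_pos)
    qed
    have intsum: "(\<Sum>i\<in>I. E * int (wt i) + s * w i) = D"
      using hI wsum DE by (simp add: sum.distrib sum_distrib_left[symmetric])
    have asum: "(\<Sum>i\<in>I. \<alpha> i) = 1"
    proof -
      have "(\<Sum>i\<in>I. \<alpha> i) = real_of_int (\<Sum>i\<in>I. E * int (wt i) + s * w i) / real_of_int D"
        unfolding \<alpha>_def by (simp add: sum_divide_distrib)
      then show ?thesis using intsum Dpos by simp
    qed
    have vint: "(\<Sum>i\<in>I. (E * int (wt i) + s * w i) *s \<rho> i) = D *s (s *s y)"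
    proof -
      have "(\<Sum>i\<in>I. (E * int (wt i) + s * w i) *s \<rho> i) = E *s (\<Sum>i\<in>I. int (wt i) *s \<rho> i) + s *s (\<Sum>i\<in>I. w i *s \<rho> i)"
        unfolding vsum_add vsum_cmul ..
      also have "\<dots> = s *s (D *s y)" using rel Y by simp
      also have "\<dots> = D *s (s *s y)" by (simp add: smult_smult_int mult.commute)
      finally show ?thesis .
    qed
    have avec: "(\<Sum>i\<in>I. \<alpha> i *\<^sub>R to_real_vec (\<rho> i)) = to_real_vec (s *s y)"
    proof -
      have "(\<Sum>i\<in>I. \<alpha> i *\<^sub>R to_real_vec (\<rho> i)) = (1 / real_of_int D) *\<^sub>R (\<Sum>i\<in>I. real_of_int (E * int (wt i) + s * w i) *\<^sub>R to_real_vec (\<rho> i))"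
        unfolding \<alpha>_def scaleR_sum_right by (intro sum.cong) (auto simp: divide_inverse mult.commute)
      also have "(\<Sum>i\<in>I. real_of_int (E * int (wt i) + s * w i) *\<^sub>R to_real_vec (\<rho> i)) = to_real_vec (D *s (s *s y))"
        unfolding vint[symmetric] trv_sum trv_smult ..
      also have "\<dots> = real_of_int D *\<^sub>R to_real_vec (s *s y)" by (rule trv_smult)
      finally show ?thesis using Dpos by simp
    qed
    have "to_real_vec (s *s y) \<in> interior (assoc_simplex \<rho>)"
      using interior_pt[OF fw, of \<alpha>] apos asum avec unfolding I_def n_def by simp
    then have "s *s y = 0" using can unfolding canonical_simplex_def by blast
    then have y0: "y = 0" using s1 by (simp add: vec_eq_iff)
    then have wrel: "(\<Sum>i\<in>I. w i *s \<rho> i) = 0" using Y by simp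
    have wr: "(\<Sum>i\<in>I. real_of_int (w i) *\<^sub>R to_real_vec (\<rho> i)) = 0"
      using arg_cong[OF wrel, of to_real_vec] unfolding trv_sum trv_smult by simp
    have wrs: "(\<Sum>i\<in>I. real_of_int (w i)) = 0" using wsum by (metis of_int_0 of_int_sum)
    have w0: "w i = 0" if "i \<in> I" for i
      using affine_rel_zero[OF fw, of "\<lambda>i. real_of_int (w i)" i] wr wrs that unfolding I_def n_def by simp
    have bb: "b = b'"
    proof (rule PiE_ext)
      show "b \<in> PiE I1 (\<lambda>i. {0..<E * int (wt i)})" "b' \<in> PiE I1 (\<lambda>i. {0..<E * int (wt i)})"
        using mem unfolding Box_def by auto
      fix i assume "i \<in> I1"
      then have "w i = 0" "i \<noteq> 0" using w0 I1I by (metis insertCI, metis)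
      then show "b i = b' i" unfolding w_def by simp
    qed
    have "rep C - rep C' \<in> L"
      using y0 gen_memI[of z \<rho> n] unfolding y_def L_def I_def by simp
    then have "cosetL L (rep C) = cosetL L (rep C')" unfolding L_def by (simp add: gen_cosetL_eq)
    then have CC': "C = C'" using rep mem by metis
    have hd: "int h dvd (int j - int j') * int (wt i)" if "i \<in> I" for i
    proof -
      have "u C j i - u C' j' i = (int j - int j') * int (wt i) * E" unfolding u_def CC' by (simp add: algebra_simps)
      moreover have "u C j i - u C' j' i = E * (int h * z i)" using Z[OF that] w0[OF that] DE by simp
      ultimately have "E * (int h * z i) = E * ((int j - int j') * int (wt i))" by (simp add: algebra_simps)
      then have "int h * z i = (int j - int j') * int (wt i)" using Epos by simp
      then show ?thesis by (metis dvd_triv_left)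
    qed
    define d where "d = nat \<bar>int j - int j'\<bar>"
    have hd2: "h dvd d * wt i" if "i \<in> I" for i
    proof -
      have "int h dvd \<bar>(int j - int j') * int (wt i)\<bar>" using hd[OF that] by simp
      moreover have "\<bar>(int j - int j') * int (wt i)\<bar> = int (d * wt i)" unfolding d_def by (simp add: abs_mult)
      ultimately show ?thesis by (simp only: of_nat_dvd_iff)
    qed
    have g1: "Gcd (wt ` I) = 1" using fw unfolding fake_wps_data_def I_def n_def by simp
    have "h dvd Gcd ((*) d ` (wt ` I))" using hd2 by (auto simp: dvd_Gcd_iff)
    then have "h dvd d" using g1 by (simp add: Gcd_mult)
    moreover have "d < h" using mem unfolding d_def by auto
    ultimately have "d = 0" by (meson dvd_imp_le not_le neq0_conv)
    then have "j = j'" unfolding d_def by simp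
    then show "p = p'" unfolding p p' using CC' bb by simp
  qed
  have "card Dom \<le> card T"
    using card_inj_on_le[OF inj maps] unfolding T_def by (simp add: I1_def finite_PiE)
  moreover have "card Dom = m * (h * (\<Prod>i\<in>I1. wt i) * En ^ n)"
  proof -
    have cB: "card Box = (\<Prod>i\<in>I1. wt i) * En ^ n"
    proof -
      have "card Box = (\<Prod>i\<in>I1. En * wt i)"
        unfolding Box_def I1_def by (simp add: card_PiE E_def nat_mult_distrib)
      also have "\<dots> = (\<Prod>i\<in>I1. wt i) * En ^ n" by (simp add: prod.distrib I1_def)
      finally show ?thesis .
    qed
    have "m = card CC" unfolding m_def CC_def L_def n_def ..
    then show ?thesis unfolding Dom_def by (simp add: card_cartesian_product cB)
  qed
  moreover have "card T = (h * En) ^ n"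
    unfolding T_def I1_def by (simp add: card_PiE D_def flip: of_nat_mult)
  ultimately show ?thesis unfolding n_def I1_def En_def by (simp add: algebra_simps)
qed


theorem mainTheorem8:
  fixes \<rho> :: "nat \<Rightarrow> int ^ 'n" and wt :: "nat \<Rightarrow> nat"
  assumes "fake_wps_data \<rho> wt"
    and "canonical_simplex \<rho>"
  shows "real (mult_simplex \<rho>) \<le>
    (real (\<Sum>i\<in>{0..CARD('n)}. wt i)) ^ (CARD('n) - 1) / real (\<Prod>i\<in>{1..CARD('n)}. wt i)"
proof -
  define n where "n = CARD('n)"
  define h where "h = (\<Sum>i\<in>{0..CARD('n)}. wt i)"
  define P where "P = (\<Prod>i\<in>{1..CARD('n)}. wt i)"
  define m where "m = card (range (cosetL (gen_sublattice \<rho> CARD('n))))"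
  have mm: "mult_simplex \<rho> = m" unfolding mult_simplex_def m_def lattice_index_cosetL ..
  have Ppos: "P > 0" unfolding P_def using wt_pos[OF assms(1)] by (intro prod_pos) auto
  have hpos: "h > 0" unfolding h_def by (rule h_pos[OF assms(1)])
  have npos: "n > 0" unfolding n_def by simp
  have key: "m * P \<le> h ^ (n - 1)"
  proof (cases "finite (range (cosetL (gen_sublattice \<rho> CARD('n))))")
    case False
    then show ?thesis unfolding m_def by simp
  next
    case True
    have "m * (h * P) * (fact m)^n \<le> (h * fact m) ^ n"
      using main_ineq[OF assms True] unfolding m_def h_def P_def n_def .
    then have "(m * (h * P)) * (fact m)^n \<le> h ^ n * (fact m) ^ n" by (simp add: power_mult_distrib)
    moreover have "(fact m :: nat) ^ n > 0" by simp
    ultimately have "m * (h * P) \<le> h ^ n" by (meson mult_le_cancel2)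
    moreover have "h ^ n = h * h ^ (n - 1)" using npos by (cases n) auto
    ultimately have "h * (m * P) \<le> h * h ^ (n - 1)" by (simp add: algebra_simps)
    then show ?thesis using hpos by simp
  qed
  have "real (m * P) \<le> real (h ^ (n - 1))" using key by (simp only: of_nat_le_iff)
  then have "real m * real P \<le> real h ^ (n - 1)" by simp
  then have "real m \<le> real h ^ (n - 1) / real P" using Ppos by (simp add: pos_le_divide_eq)
  then show ?thesis unfolding mm h_def P_def n_def .
qed

end
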